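(* For a topological space $X$ the following are equivalent: (1) $X$ is strongly star Menger; (2) for every nonempty $A\subseteq X$ and every sequence $(\mathcal U_n:n\in\omega)$ of families of open subsets of $X$ with $\overline A\subseteq\bigcup\mathcal U_n$ for every $n$, there is a sequence $(F_n:n\in\omega)$ of finite subsets of $X$ with $A\subseteq\bigcup_{n\in\omega}st(F_n,\mathcal U_n)$.
   Context: For a family $\mathcal U$ of subsets of $X$ and $A\subseteq X$, $st(A,\mathcal U)=\bigcup\{U\in\mathcal U: U\cap A\neq\emptyset\}$. A space $X$ is strongly star Menger if for every sequence $(\mathcal U_n:n\in\omega)$ of open covers of $X$ there are finite sets $F_n\subseteq X$ ($n\in\omega$) with $X=\bigcup_{n\in\omega}st(F_n,\mathcal U_n)$. *)

theory Defs
  imports "HOL-Analysis.Analysis"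
begin

definition st :: "'a set \<Rightarrow> 'a set set \<Rightarrow> 'a set" where
  "st A \<U> = \<Union>{U \<in> \<U>. U \<inter> A \<noteq> {}}"

definition open_cover :: "'a topology \<Rightarrow> 'a set set \<Rightarrow> bool" where
  "open_cover X \<U> \<longleftrightarrow> (\<forall>U\<in>\<U>. openin X U) \<and> topspace X \<subseteq> \<Union>\<U>"

definition strongly_star_Menger :: "'a topology \<Rightarrow> bool" where
  "strongly_star_Menger X \<longleftrightarrow>
     (\<forall>\<U> :: nat \<Rightarrow> 'a set set. (\<forall>n. open_cover X (\<U> n)) \<longrightarrow>
        (\<exists>F :: nat \<Rightarrow> 'a set. (\<forall>n. finite (F n) \<and> F n \<subseteq> topspace X) \<and>
            topspace X = (\<Union>n. st (F n) (\<U> n))))"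

end

theory Submission
  imports Defs
begin

theorem proposition2p1:
  fixes X :: "'a topology"
  shows "strongly_star_Menger X \<longleftrightarrow>
    (\<forall>(A :: 'a set) (\<U> :: nat \<Rightarrow> 'a set set).
        A \<noteq> {} \<and> A \<subseteq> topspace X \<and>
        (\<forall>n. (\<forall>U\<in>\<U> n. openin X U) \<and> X closure_of A \<subseteq> \<Union>(\<U> n)) \<longrightarrow>
        (\<exists>F :: nat \<Rightarrow> 'a set. (\<forall>n. finite (F n) \<and> F n \<subseteq> topspace X) \<and>
            A \<subseteq> (\<Union>n. st (F n) (\<U> n))))"
proof
  assume H: "strongly_star_Menger X"
  show "\<forall>(A :: 'a set) (\<U> :: nat \<Rightarrow> 'a set set).
        A \<noteq> {} \<and> A \<subseteq> topspace X \<and>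
        (\<forall>n. (\<forall>U\<in>\<U> n. openin X U) \<and> X closure_of A \<subseteq> \<Union>(\<U> n)) \<longrightarrow>
        (\<exists>F :: nat \<Rightarrow> 'a set. (\<forall>n. finite (F n) \<and> F n \<subseteq> topspace X) \<and>
            A \<subseteq> (\<Union>n. st (F n) (\<U> n)))"
  proof (intro allI impI)
    fix A :: "'a set" and \<U> :: "nat \<Rightarrow> 'a set set"
    assume a: "A \<noteq> {} \<and> A \<subseteq> topspace X \<and>
        (\<forall>n. (\<forall>U\<in>\<U> n. openin X U) \<and> X closure_of A \<subseteq> \<Union>(\<U> n))"
    define V where "V n = insert (topspace X - X closure_of A) (\<U> n)" for n
    have ocV: "open_cover X (V n)" for n
      unfolding open_cover_def V_def using a by auto
    then obtain F where F: "\<forall>n. finite (F n) \<and> F n \<subseteq> topspace X"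
      and cov: "topspace X = (\<Union>n. st (F n) (V n))"
      using H ocV unfolding strongly_star_Menger_def by meson
    have "A \<subseteq> (\<Union>n. st (F n) (\<U> n))"
    proof
      fix x assume x: "x \<in> A"
      then have xt: "x \<in> topspace X" using a by auto
      have xc: "x \<in> X closure_of A" using x a closure_of_subset by blast
      from xt cov obtain n where "x \<in> st (F n) (V n)" by blast
      then obtain W where W: "W \<in> V n" "W \<inter> F n \<noteq> {}" "x \<in> W"
        unfolding st_def by blast
      then have "W \<in> \<U> n" using xc unfolding V_def by auto
      then show "x \<in> (\<Union>n. st (F n) (\<U> n))" using W unfolding st_def by blast
    qed
    then show "\<exists>F :: nat \<Rightarrow> 'a set. (\<forall>n. finite (F n) \<and> F n \<subseteq> topspace X) \<and>
            A \<subseteq> (\<Union>n. st (F n) (\<U> n))" using F by blast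
  qed
next
  assume H: "\<forall>(A :: 'a set) (\<U> :: nat \<Rightarrow> 'a set set).
        A \<noteq> {} \<and> A \<subseteq> topspace X \<and>
        (\<forall>n. (\<forall>U\<in>\<U> n. openin X U) \<and> X closure_of A \<subseteq> \<Union>(\<U> n)) \<longrightarrow>
        (\<exists>F :: nat \<Rightarrow> 'a set. (\<forall>n. finite (F n) \<and> F n \<subseteq> topspace X) \<and>
            A \<subseteq> (\<Union>n. st (F n) (\<U> n)))"
  show "strongly_star_Menger X"
    unfolding strongly_star_Menger_def
  proof (intro allI impI)
    fix \<U> :: "nat \<Rightarrow> 'a set set"
    assume oc: "\<forall>n. open_cover X (\<U> n)"
    have sub: "st G (\<U> n) \<subseteq> topspace X" for G n
    proof
      fix x assume "x \<in> st G (\<U> n)"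
      then obtain U where "U \<in> \<U> n" "x \<in> U" unfolding st_def by blast
      then show "x \<in> topspace X" using oc openin_subset unfolding open_cover_def by blast
    qed
    show "\<exists>F :: nat \<Rightarrow> 'a set. (\<forall>n. finite (F n) \<and> F n \<subseteq> topspace X) \<and>
            topspace X = (\<Union>n. st (F n) (\<U> n))"
    proof (cases "topspace X = {}")
      case True
      then show ?thesis by (intro exI[of _ "\<lambda>_. {}"]) (auto simp: st_def)
    next
      case False
      have "\<forall>n. (\<forall>U\<in>\<U> n. openin X U) \<and> X closure_of (topspace X) \<subseteq> \<Union>(\<U> n)"
        using oc unfolding open_cover_def by simp
      then obtain F where F: "\<forall>n. finite (F n) \<and> F n \<subseteq> topspace X"
        and c: "topspace X \<subseteq> (\<Union>n. st (F n) (\<U> n))"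
        using H[rule_format, of "topspace X" \<U>] False by auto
      show ?thesis using F c sub by (intro exI[of _ F]) blast
    qed
  qed
qed

end
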